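(* Let $i=\sqrt{-1}$ and let $\zeta_8$ be a primitive $8$-th root of unity. (1) $\{\operatorname{Tr}(M) : M\in G_q(i)\}=\{0,\pm1,\pm2,\pm i,\pm 2i,\pm1\pm i\ (\text{arbitrary signs})\}=\{0,\ c,\ \sqrt{2}\,\zeta_8\,c,\ 2c : c=i^j,\ j=0,1,2,3\}$. (2) For $M_q\in G_q$, let $f(q)=\operatorname{Tr} M_q$. If $f(1)$ is a multiple of $4$, then $f(i)=0$.
   Context: Let $q$ be a formal parameter and let $R_q=\begin{pmatrix} q & 1\\ 0 & 1\end{pmatrix}$, $S_q=\begin{pmatrix} 0 & -q^{-1}\\ 1 & 0\end{pmatrix}\in \mathrm{GL}(2,\mathbb{Z}[q,q^{-1}])$. Let $G_q=\langle R_q,S_q\rangle$ be the group they generate. For $\zeta\in\mathbb{C}^*$, set $G_q(\zeta)=\{M_q|_{q=\zeta} : M_q\in G_q\}\subset \mathrm{GL}(2,\mathbb{C})$. *)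

theory Defs
  imports "HOL-Analysis.Analysis"
begin

definition mat2 :: "complex \<Rightarrow> complex \<Rightarrow> complex \<Rightarrow> complex \<Rightarrow> complex^2^2" where
  "mat2 a b c d = vector [vector [a, b], vector [c, d]]"

text \<open>The generators R_q, S_q and their inverses, viewed as functions of the
  parameter q (meaningful for q nonzero; entries are Laurent polynomials in q).\<close>
definition Rq :: "complex \<Rightarrow> complex^2^2" where
  "Rq q = mat2 q 1 0 1"
definition Sq :: "complex \<Rightarrow> complex^2^2" where
  "Sq q = mat2 0 (- inverse q) 1 0"
definition Rq_inv :: "complex \<Rightarrow> complex^2^2" where
  "Rq_inv q = mat2 (inverse q) (- inverse q) 0 1"
definition Sq_inv :: "complex \<Rightarrow> complex^2^2" where
  "Sq_inv q = mat2 0 1 (- q) 0"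

text \<open>G_q = the group generated by R_q and S_q: all finite products of the
  generators and their inverses (each element is a Laurent-polynomial matrix,
  represented by its evaluation function q \<mapsto> M_q).\<close>
inductive_set Gq :: "(complex \<Rightarrow> complex^2^2) set" where
  one: "(\<lambda>q. mat 1) \<in> Gq"
| R: "Rq \<in> Gq"
| S: "Sq \<in> Gq"
| Rinv: "Rq_inv \<in> Gq"
| Sinv: "Sq_inv \<in> Gq"
| mult: "M \<in> Gq \<Longrightarrow> N \<in> Gq \<Longrightarrow> (\<lambda>q. M q ** N q) \<in> Gq"

definition Gq_at :: "complex \<Rightarrow> (complex^2^2) set" where
  "Gq_at z = (\<lambda>M. M z) ` Gq"

end

theory Submission
  imports Defs
begin

definition gauss :: "int \<Rightarrow> int \<Rightarrow> complex" where
  "gauss a b = of_int a + of_int b * \<i>"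

lemma gauss_mult: "gauss a b * gauss c d = gauss (a*c - b*d) (a*d + b*c)"
  by (simp add: gauss_def complex_eq_iff)

lemma gauss_add: "gauss a b + gauss c d = gauss (a+c) (b+d)"
  by (simp add: gauss_def complex_eq_iff)

lemma mat2_mult: "mat2 a b c d ** mat2 e f g h = mat2 (a*e+b*g) (a*f+b*h) (c*e+d*g) (c*f+d*h)"
  unfolding mat2_def matrix_matrix_mult_def
  by (simp add: vec_eq_iff forall_2 sum_2)

lemma mat2_one: "(mat 1 :: complex^2^2) = mat2 1 0 0 1"
  unfolding mat2_def by (simp add: vec_eq_iff forall_2 mat_def)

lemma trace_mat2: "trace (mat2 a b c d) = a + d"
  unfolding mat2_def trace_def by (simp add: sum_2)

definition m4 :: "int \<Rightarrow> int \<Rightarrow> int \<Rightarrow> int \<Rightarrow> int" where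
  "m4 a b c d = (a*c + b*d) mod 4"
definition gre :: "int \<Rightarrow> int \<Rightarrow> int \<Rightarrow> int \<Rightarrow> int \<Rightarrow> int \<Rightarrow> int \<Rightarrow> int \<Rightarrow> int" where
  "gre a b c d e f g h = (a*c - b*d) + (e*g - f*h)"
definition gim :: "int \<Rightarrow> int \<Rightarrow> int \<Rightarrow> int \<Rightarrow> int \<Rightarrow> int \<Rightarrow> int \<Rightarrow> int \<Rightarrow> int" where
  "gim a b c d e f g h = (a*d + b*c) + (e*h + f*g)"

lemma gauss_lin: "gauss a b * gauss c d + gauss e f * gauss g h = gauss (gre a b c d e f g h) (gim a b c d e f g h)"
  by (simp add: gauss_def gre_def gim_def complex_eq_iff)

definition mulst :: "int list \<Rightarrow> int list \<Rightarrow> int list" where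
  "mulst s g = [m4 (s!0) (s!1) (g!0) (g!2), m4 (s!0) (s!1) (g!1) (g!3),
                m4 (s!2) (s!3) (g!0) (g!2), m4 (s!2) (s!3) (g!1) (g!3),
     gre (s!4) (s!5) (g!4) (g!5) (s!6) (s!7) (g!8) (g!9), gim (s!4) (s!5) (g!4) (g!5) (s!6) (s!7) (g!8) (g!9),
     gre (s!4) (s!5) (g!6) (g!7) (s!6) (s!7) (g!10) (g!11), gim (s!4) (s!5) (g!6) (g!7) (s!6) (s!7) (g!10) (g!11),
     gre (s!8) (s!9) (g!4) (g!5) (s!10) (s!11) (g!8) (g!9), gim (s!8) (s!9) (g!4) (g!5) (s!10) (s!11) (g!8) (g!9),
     gre (s!8) (s!9) (g!6) (g!7) (s!10) (s!11) (g!10) (g!11), gim (s!8) (s!9) (g!6) (g!7) (s!10) (s!11) (g!10) (g!11)]"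

lemma mulst_nth:
  "mulst s g ! 0 = m4 (s!0) (s!1) (g!0) (g!2)" "mulst s g ! 1 = m4 (s!0) (s!1) (g!1) (g!3)"
  "mulst s g ! 2 = m4 (s!2) (s!3) (g!0) (g!2)" "mulst s g ! 3 = m4 (s!2) (s!3) (g!1) (g!3)"
  "mulst s g ! 4 = gre (s!4) (s!5) (g!4) (g!5) (s!6) (s!7) (g!8) (g!9)"
  "mulst s g ! 5 = gim (s!4) (s!5) (g!4) (g!5) (s!6) (s!7) (g!8) (g!9)"
  "mulst s g ! 6 = gre (s!4) (s!5) (g!6) (g!7) (s!6) (s!7) (g!10) (g!11)"
  "mulst s g ! 7 = gim (s!4) (s!5) (g!6) (g!7) (s!6) (s!7) (g!10) (g!11)"
  "mulst s g ! 8 = gre (s!8) (s!9) (g!4) (g!5) (s!10) (s!11) (g!8) (g!9)"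
  "mulst s g ! 9 = gim (s!8) (s!9) (g!4) (g!5) (s!10) (s!11) (g!8) (g!9)"
  "mulst s g ! 10 = gre (s!8) (s!9) (g!6) (g!7) (s!10) (s!11) (g!10) (g!11)"
  "mulst s g ! 11 = gim (s!8) (s!9) (g!6) (g!7) (s!10) (s!11) (g!10) (g!11)"
  by (simp_all add: mulst_def)

definition good :: "int list \<Rightarrow> complex^2^2 \<Rightarrow> complex^2^2 \<Rightarrow> bool" where
  "good s X Y \<longleftrightarrow> (\<exists>a0 a1 a2 a3. X = mat2 (of_int a0) (of_int a1) (of_int a2) (of_int a3)
      \<and> a0 mod 4 = s!0 \<and> a1 mod 4 = s!1 \<and> a2 mod 4 = s!2 \<and> a3 mod 4 = s!3)
    \<and> Y = mat2 (gauss (s!4) (s!5)) (gauss (s!6) (s!7)) (gauss (s!8) (s!9)) (gauss (s!10) (s!11))"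

lemma mod_lin0: "(a::int) mod 4 = a' \<Longrightarrow> b mod 4 = b' \<Longrightarrow> c mod 4 = c' \<Longrightarrow> d mod 4 = d'
  \<Longrightarrow> (a*b + c*d) mod 4 = (a'*b' + c'*d') mod 4"
proof -
  assume h: "a mod 4 = a'" "b mod 4 = b'" "c mod 4 = c'" "d mod 4 = d'"
  have "(a*b + c*d) mod 4 = ((a*b) mod 4 + (c*d) mod 4) mod 4" by (rule mod_add_eq[symmetric])
  also have "(a*b) mod 4 = (a' * b') mod 4" unfolding h[symmetric] by (rule mod_mult_eq[symmetric])
  also have "(c*d) mod 4 = (c' * d') mod 4" unfolding h[symmetric] by (rule mod_mult_eq[symmetric])
  also have "((a' * b') mod 4 + (c' * d') mod 4) mod 4 = (a'*b' + c'*d') mod 4" by (rule mod_add_eq)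
  finally show ?thesis .
qed

lemma mod_lin: "(a::int) mod 4 = a' \<Longrightarrow> b mod 4 = b' \<Longrightarrow> c mod 4 = c' \<Longrightarrow> d mod 4 = d'
  \<Longrightarrow> (a*b + c*d) mod 4 = m4 a' c' b' d'"
  unfolding m4_def by (rule mod_lin0)

lemma good_mult:
  assumes "good s X Y" "good g X' Y'"
  shows "good (mulst s g) (X ** X') (Y ** Y')"
proof -
  obtain a0 a1 a2 a3 where A: "X = mat2 (of_int a0) (of_int a1) (of_int a2) (of_int a3)"
      "a0 mod 4 = s!0" "a1 mod 4 = s!1" "a2 mod 4 = s!2" "a3 mod 4 = s!3"
    and Y: "Y = mat2 (gauss (s!4) (s!5)) (gauss (s!6) (s!7)) (gauss (s!8) (s!9)) (gauss (s!10) (s!11))"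
    using assms(1) unfolding good_def by blast
  obtain b0 b1 b2 b3 where B: "X' = mat2 (of_int b0) (of_int b1) (of_int b2) (of_int b3)"
      "b0 mod 4 = g!0" "b1 mod 4 = g!1" "b2 mod 4 = g!2" "b3 mod 4 = g!3"
    and Y': "Y' = mat2 (gauss (g!4) (g!5)) (gauss (g!6) (g!7)) (gauss (g!8) (g!9)) (gauss (g!10) (g!11))"
    using assms(2) unfolding good_def by blast
  have e: "X ** X' = mat2 (of_int (a0*b0+a1*b2)) (of_int (a0*b1+a1*b3)) (of_int (a2*b0+a3*b2)) (of_int (a2*b1+a3*b3))"
    unfolding A(1) B(1) mat2_mult by simp
  have 1: "\<exists>c0 c1 c2 c3. X ** X' = mat2 (of_int c0) (of_int c1) (of_int c2) (of_int c3)
      \<and> c0 mod 4 = mulst s g!0 \<and> c1 mod 4 = mulst s g!1 \<and> c2 mod 4 = mulst s g!2 \<and> c3 mod 4 = mulst s g!3"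
    apply (rule exI[of _ "a0*b0+a1*b2"], rule exI[of _ "a0*b1+a1*b3"],
           rule exI[of _ "a2*b0+a3*b2"], rule exI[of _ "a2*b1+a3*b3"])
    unfolding mulst_nth using A(2-5) B(2-5) e by (simp only: mod_lin simp_thms)
  have 2: "Y ** Y' = mat2 (gauss (mulst s g!4) (mulst s g!5)) (gauss (mulst s g!6) (mulst s g!7))
       (gauss (mulst s g!8) (mulst s g!9)) (gauss (mulst s g!10) (mulst s g!11))"
    unfolding Y Y' mat2_mult mulst_nth gauss_lin ..
  show ?thesis unfolding good_def using 1 2 by blast
qed

definition gR :: "int list" where "gR = [1,1,0,1, 0,1, 1,0, 0,0, 1,0]"
definition gS :: "int list" where "gS = [0,3,1,0, 0,0, 0,1, 1,0, 0,0]"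
definition gRi :: "int list" where "gRi = [1,3,0,1, 0,-1, 0,1, 0,0, 1,0]"
definition gSi :: "int list" where "gSi = [0,1,3,0, 0,0, 1,0, 0,-1, 0,0]"
definition gI :: "int list" where "gI = [1,0,0,1, 1,0, 0,0, 0,0, 1,0]"

lemma good_R: "good gR (Rq 1) (Rq \<i>)"
  unfolding good_def gR_def Rq_def
  by (rule conjI, rule exI[of _ 1], rule exI[of _ 1], rule exI[of _ 0], rule exI[of _ 1])
     (simp_all add: gauss_def)

lemma good_S: "good gS (Sq 1) (Sq \<i>)"
  unfolding good_def gS_def Sq_def
  by (rule conjI, rule exI[of _ 0], rule exI[of _ "-1"], rule exI[of _ 1], rule exI[of _ 0])
     (simp_all add: gauss_def)

lemma good_Ri: "good gRi (Rq_inv 1) (Rq_inv \<i>)"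
  unfolding good_def gRi_def Rq_inv_def
  by (rule conjI, rule exI[of _ 1], rule exI[of _ "-1"], rule exI[of _ 0], rule exI[of _ 1])
     (simp_all add: gauss_def)

lemma good_Si: "good gSi (Sq_inv 1) (Sq_inv \<i>)"
  unfolding good_def gSi_def Sq_inv_def
  by (rule conjI, rule exI[of _ 0], rule exI[of _ 1], rule exI[of _ "-1"], rule exI[of _ 0])
     (simp_all add: gauss_def)

lemma good_I: "good gI (mat 1) (mat 1)"
  unfolding good_def gI_def mat2_one
  by (rule conjI, rule exI[of _ 1], rule exI[of _ 0], rule exI[of _ 0], rule exI[of _ 1])
     (simp_all add: gauss_def)

definition B0 :: "int list list" where
  "B0 = [[0,1,3,0,0,0,-1,0,0,1,0,0],[0,1,3,0,0,0,1,0,0,-1,0,0],[0,1,3,0,0,0,0,-1,-1,0,0,0],[0,1,3,0,0,0,0,1,1,0,0,0]]"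
definition B1 :: "int list list" where
  "B1 = [[0,1,3,1,0,0,-1,0,1,0,-1,0],[0,1,3,1,0,0,1,0,-1,0,1,0],[0,1,3,1,0,0,0,-1,0,1,0,-1],[0,1,3,1,0,0,0,1,0,-1,0,1]]"
definition B2 :: "int list list" where
  "B2 = [[0,1,3,2,0,0,-1,0,0,-1,-1,1],[0,1,3,2,0,0,1,0,0,1,1,-1],[0,1,3,2,0,0,0,-1,1,0,-1,-1],[0,1,3,2,0,0,0,1,-1,0,1,1]]"
definition B3 :: "int list list" where
  "B3 = [[0,1,3,3,0,0,-1,0,-1,0,0,1],[0,1,3,3,0,0,1,0,1,0,0,-1],[0,1,3,3,0,0,0,-1,0,-1,-1,0],[0,1,3,3,0,0,0,1,0,1,1,0]]"
definition B4 :: "int list list" where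
  "B4 = [[0,3,1,0,0,0,-1,0,0,1,0,0],[0,3,1,0,0,0,1,0,0,-1,0,0],[0,3,1,0,0,0,0,-1,-1,0,0,0],[0,3,1,0,0,0,0,1,1,0,0,0]]"
definition B5 :: "int list list" where
  "B5 = [[0,3,1,1,0,0,-1,0,-1,0,0,1],[0,3,1,1,0,0,1,0,1,0,0,-1],[0,3,1,1,0,0,0,-1,0,-1,-1,0],[0,3,1,1,0,0,0,1,0,1,1,0]]"
definition B6 :: "int list list" where
  "B6 = [[0,3,1,2,0,0,-1,0,0,-1,-1,1],[0,3,1,2,0,0,1,0,0,1,1,-1],[0,3,1,2,0,0,0,-1,1,0,-1,-1],[0,3,1,2,0,0,0,1,-1,0,1,1]]"
definition B7 :: "int list list" where
  "B7 = [[0,3,1,3,0,0,-1,0,1,0,-1,0],[0,3,1,3,0,0,1,0,-1,0,1,0],[0,3,1,3,0,0,0,-1,0,1,0,-1],[0,3,1,3,0,0,0,1,0,-1,0,1]]"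
definition B8 :: "int list list" where
  "B8 = [[1,0,0,1,-1,0,0,0,0,0,-1,0],[1,0,0,1,1,0,0,0,0,0,1,0],[1,0,0,1,0,-1,0,0,0,0,0,-1],[1,0,0,1,0,1,0,0,0,0,0,1]]"
definition B9 :: "int list list" where
  "B9 = [[1,0,1,1,-1,0,0,0,-1,0,0,1],[1,0,1,1,1,0,0,0,1,0,0,-1],[1,0,1,1,0,-1,0,0,0,-1,-1,0],[1,0,1,1,0,1,0,0,0,1,1,0]]"
definition B10 :: "int list list" where
  "B10 = [[1,0,2,1,-1,0,0,0,-1,1,1,0],[1,0,2,1,1,0,0,0,1,-1,-1,0],[1,0,2,1,0,-1,0,0,-1,-1,0,1],[1,0,2,1,0,1,0,0,1,1,0,-1]]"
definition B11 :: "int list list" where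
  "B11 = [[1,0,3,1,-1,0,0,0,0,1,0,-1],[1,0,3,1,1,0,0,0,0,-1,0,1],[1,0,3,1,0,-1,0,0,-1,0,1,0],[1,0,3,1,0,1,0,0,1,0,-1,0]]"
definition B12 :: "int list list" where
  "B12 = [[1,1,0,1,-1,0,0,1,0,0,0,1],[1,1,0,1,1,0,0,-1,0,0,0,-1],[1,1,0,1,0,-1,-1,0,0,0,-1,0],[1,1,0,1,0,1,1,0,0,0,1,0]]"
definition B13 :: "int list list" where
  "B13 = [[1,1,1,2,-1,0,0,1,-1,0,1,1],[1,1,1,2,1,0,0,-1,1,0,-1,-1],[1,1,1,2,0,-1,-1,0,0,-1,-1,1],[1,1,1,2,0,1,1,0,0,1,1,-1]]"
definition B14 :: "int list list" where
  "B14 = [[1,1,2,3,-1,0,0,1,-1,1,1,0],[1,1,2,3,1,0,0,-1,1,-1,-1,0],[1,1,2,3,0,-1,-1,0,-1,-1,0,1],[1,1,2,3,0,1,1,0,1,1,0,-1]]"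
definition B15 :: "int list list" where
  "B15 = [[1,1,3,0,-1,0,0,1,0,1,0,0],[1,1,3,0,1,0,0,-1,0,-1,0,0],[1,1,3,0,0,-1,-1,0,-1,0,0,0],[1,1,3,0,0,1,1,0,1,0,0,0]]"
definition B16 :: "int list list" where
  "B16 = [[1,2,0,1,-1,0,1,1,0,0,1,0],[1,2,0,1,1,0,-1,-1,0,0,-1,0],[1,2,0,1,0,-1,-1,1,0,0,0,1],[1,2,0,1,0,1,1,-1,0,0,0,-1]]"
definition B17 :: "int list list" where
  "B17 = [[1,2,1,3,-1,0,1,1,-1,0,1,0],[1,2,1,3,1,0,-1,-1,1,0,-1,0],[1,2,1,3,0,-1,-1,1,0,-1,0,1],[1,2,1,3,0,1,1,-1,0,1,0,-1]]"
definition B18 :: "int list list" where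
  "B18 = [[1,2,2,1,-1,0,1,1,-1,1,1,0],[1,2,2,1,1,0,-1,-1,1,-1,-1,0],[1,2,2,1,0,-1,-1,1,-1,-1,0,1],[1,2,2,1,0,1,1,-1,1,1,0,-1]]"
definition B19 :: "int list list" where
  "B19 = [[1,2,3,3,-1,0,1,1,0,1,1,0],[1,2,3,3,1,0,-1,-1,0,-1,-1,0],[1,2,3,3,0,-1,-1,1,-1,0,0,1],[1,2,3,3,0,1,1,-1,1,0,0,-1]]"
definition B20 :: "int list list" where
  "B20 = [[1,3,0,1,-1,0,1,0,0,0,0,-1],[1,3,0,1,1,0,-1,0,0,0,0,1],[1,3,0,1,0,-1,0,1,0,0,1,0],[1,3,0,1,0,1,0,-1,0,0,-1,0]]"
definition B21 :: "int list list" where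
  "B21 = [[1,3,1,0,-1,0,1,0,-1,0,0,0],[1,3,1,0,1,0,-1,0,1,0,0,0],[1,3,1,0,0,-1,0,1,0,-1,0,0],[1,3,1,0,0,1,0,-1,0,1,0,0]]"
definition B22 :: "int list list" where
  "B22 = [[1,3,2,3,-1,0,1,0,-1,1,1,0],[1,3,2,3,1,0,-1,0,1,-1,-1,0],[1,3,2,3,0,-1,0,1,-1,-1,0,1],[1,3,2,3,0,1,0,-1,1,1,0,-1]]"
definition B23 :: "int list list" where
  "B23 = [[1,3,3,2,-1,0,1,0,0,1,1,-1],[1,3,3,2,1,0,-1,0,0,-1,-1,1],[1,3,3,2,0,-1,0,1,-1,0,1,1],[1,3,3,2,0,1,0,-1,1,0,-1,-1]]"
definition B24 :: "int list list" where
  "B24 = [[2,1,1,1,-1,1,1,0,0,1,1,0],[2,1,1,1,-1,-1,0,1,-1,0,0,1],[2,1,1,1,1,1,0,-1,1,0,0,-1],[2,1,1,1,1,-1,-1,0,0,-1,-1,0]]"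
definition B25 :: "int list list" where
  "B25 = [[2,1,1,3,-1,1,1,0,0,1,0,-1],[2,1,1,3,-1,-1,0,1,-1,0,1,0],[2,1,1,3,1,1,0,-1,1,0,-1,0],[2,1,1,3,1,-1,-1,0,0,-1,0,1]]"
definition B26 :: "int list list" where
  "B26 = [[2,1,3,0,-1,1,1,0,0,1,0,0],[2,1,3,0,-1,-1,0,1,-1,0,0,0],[2,1,3,0,1,1,0,-1,1,0,0,0],[2,1,3,0,1,-1,-1,0,0,-1,0,0]]"
definition B27 :: "int list list" where
  "B27 = [[2,1,3,2,-1,1,1,0,0,1,1,-1],[2,1,3,2,-1,-1,0,1,-1,0,1,1],[2,1,3,2,1,1,0,-1,1,0,-1,-1],[2,1,3,2,1,-1,-1,0,0,-1,-1,1]]"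
definition B28 :: "int list list" where
  "B28 = [[2,3,1,0,-1,1,1,0,0,1,0,0],[2,3,1,0,-1,-1,0,1,-1,0,0,0],[2,3,1,0,1,1,0,-1,1,0,0,0],[2,3,1,0,1,-1,-1,0,0,-1,0,0]]"
definition B29 :: "int list list" where
  "B29 = [[2,3,1,2,-1,1,1,0,0,1,1,-1],[2,3,1,2,-1,-1,0,1,-1,0,1,1],[2,3,1,2,1,1,0,-1,1,0,-1,-1],[2,3,1,2,1,-1,-1,0,0,-1,-1,1]]"
definition B30 :: "int list list" where
  "B30 = [[2,3,3,1,-1,1,1,0,0,1,0,-1],[2,3,3,1,-1,-1,0,1,-1,0,1,0],[2,3,3,1,1,1,0,-1,1,0,-1,0],[2,3,3,1,1,-1,-1,0,0,-1,0,1]]"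
definition B31 :: "int list list" where
  "B31 = [[2,3,3,3,-1,1,1,0,0,1,1,0],[2,3,3,3,-1,-1,0,1,-1,0,0,1],[2,3,3,3,1,1,0,-1,1,0,0,-1],[2,3,3,3,1,-1,-1,0,0,-1,-1,0]]"
definition B32 :: "int list list" where
  "B32 = [[3,0,0,3,-1,0,0,0,0,0,-1,0],[3,0,0,3,1,0,0,0,0,0,1,0],[3,0,0,3,0,-1,0,0,0,0,0,-1],[3,0,0,3,0,1,0,0,0,0,0,1]]"
definition B33 :: "int list list" where
  "B33 = [[3,0,1,3,-1,0,0,0,0,1,0,-1],[3,0,1,3,1,0,0,0,0,-1,0,1],[3,0,1,3,0,-1,0,0,-1,0,1,0],[3,0,1,3,0,1,0,0,1,0,-1,0]]"
definition B34 :: "int list list" where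
  "B34 = [[3,0,2,3,-1,0,0,0,-1,1,1,0],[3,0,2,3,1,0,0,0,1,-1,-1,0],[3,0,2,3,0,-1,0,0,-1,-1,0,1],[3,0,2,3,0,1,0,0,1,1,0,-1]]"
definition B35 :: "int list list" where
  "B35 = [[3,0,3,3,-1,0,0,0,-1,0,0,1],[3,0,3,3,1,0,0,0,1,0,0,-1],[3,0,3,3,0,-1,0,0,0,-1,-1,0],[3,0,3,3,0,1,0,0,0,1,1,0]]"
definition B36 :: "int list list" where
  "B36 = [[3,1,0,3,-1,0,1,0,0,0,0,-1],[3,1,0,3,1,0,-1,0,0,0,0,1],[3,1,0,3,0,-1,0,1,0,0,1,0],[3,1,0,3,0,1,0,-1,0,0,-1,0]]"
definition B37 :: "int list list" where
  "B37 = [[3,1,1,2,-1,0,1,0,0,1,1,-1],[3,1,1,2,1,0,-1,0,0,-1,-1,1],[3,1,1,2,0,-1,0,1,-1,0,1,1],[3,1,1,2,0,1,0,-1,1,0,-1,-1]]"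
definition B38 :: "int list list" where
  "B38 = [[3,1,2,1,-1,0,1,0,-1,1,1,0],[3,1,2,1,1,0,-1,0,1,-1,-1,0],[3,1,2,1,0,-1,0,1,-1,-1,0,1],[3,1,2,1,0,1,0,-1,1,1,0,-1]]"
definition B39 :: "int list list" where
  "B39 = [[3,1,3,0,-1,0,1,0,-1,0,0,0],[3,1,3,0,1,0,-1,0,1,0,0,0],[3,1,3,0,0,-1,0,1,0,-1,0,0],[3,1,3,0,0,1,0,-1,0,1,0,0]]"
definition B40 :: "int list list" where
  "B40 = [[3,2,0,3,-1,0,1,1,0,0,1,0],[3,2,0,3,1,0,-1,-1,0,0,-1,0],[3,2,0,3,0,-1,-1,1,0,0,0,1],[3,2,0,3,0,1,1,-1,0,0,0,-1]]"
definition B41 :: "int list list" where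
  "B41 = [[3,2,1,1,-1,0,1,1,0,1,1,0],[3,2,1,1,1,0,-1,-1,0,-1,-1,0],[3,2,1,1,0,-1,-1,1,-1,0,0,1],[3,2,1,1,0,1,1,-1,1,0,0,-1]]"
definition B42 :: "int list list" where
  "B42 = [[3,2,2,3,-1,0,1,1,-1,1,1,0],[3,2,2,3,1,0,-1,-1,1,-1,-1,0],[3,2,2,3,0,-1,-1,1,-1,-1,0,1],[3,2,2,3,0,1,1,-1,1,1,0,-1]]"
definition B43 :: "int list list" where
  "B43 = [[3,2,3,1,-1,0,1,1,-1,0,1,0],[3,2,3,1,1,0,-1,-1,1,0,-1,0],[3,2,3,1,0,-1,-1,1,0,-1,0,1],[3,2,3,1,0,1,1,-1,0,1,0,-1]]"
definition B44 :: "int list list" where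
  "B44 = [[3,3,0,3,-1,0,0,1,0,0,0,1],[3,3,0,3,1,0,0,-1,0,0,0,-1],[3,3,0,3,0,-1,-1,0,0,0,-1,0],[3,3,0,3,0,1,1,0,0,0,1,0]]"
definition B45 :: "int list list" where
  "B45 = [[3,3,1,0,-1,0,0,1,0,1,0,0],[3,3,1,0,1,0,0,-1,0,-1,0,0],[3,3,1,0,0,-1,-1,0,-1,0,0,0],[3,3,1,0,0,1,1,0,1,0,0,0]]"
definition B46 :: "int list list" where
  "B46 = [[3,3,2,1,-1,0,0,1,-1,1,1,0],[3,3,2,1,1,0,0,-1,1,-1,-1,0],[3,3,2,1,0,-1,-1,0,-1,-1,0,1],[3,3,2,1,0,1,1,0,1,1,0,-1]]"
definition B47 :: "int list list" where
  "B47 = [[3,3,3,2,-1,0,0,1,-1,0,1,1],[3,3,3,2,1,0,0,-1,1,0,-1,-1],[3,3,3,2,0,-1,-1,0,0,-1,-1,1],[3,3,3,2,0,1,1,0,0,1,1,-1]]"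

definition LL :: "int list list" where
  "LL = B0 @ B1 @ B2 @ B3 @ B4 @ B5 @ B6 @ B7 @ B8 @ B9 @ B10 @ B11 @ B12 @ B13 @ B14 @ B15 @ B16 @ B17 @ B18 @ B19 @ B20 @ B21 @ B22 @ B23 @ B24 @ B25 @ B26 @ B27 @ B28 @ B29 @ B30 @ B31 @ B32 @ B33 @ B34 @ B35 @ B36 @ B37 @ B38 @ B39 @ B40 @ B41 @ B42 @ B43 @ B44 @ B45 @ B46 @ B47"

definition look :: "int list \<Rightarrow> int list list" where
  "look s = (if s!0 = 0 then (if s!1 = 0 then [] else if s!1 = 1 then (if s!2 = 0 then [] else if s!2 = 1 then [] else if s!2 = 2 then [] else (if s!3 = 0 then B0 else if s!3 = 1 then B1 else if s!3 = 2 then B2 else B3)) else if s!1 = 2 then [] else (if s!2 = 0 then [] else if s!2 = 1 then (if s!3 = 0 then B4 else if s!3 = 1 then B5 else if s!3 = 2 then B6 else B7) else if s!2 = 2 then [] else [])) else if s!0 = 1 then (if s!1 = 0 then (if s!2 = 0 then (if s!3 = 0 then [] else if s!3 = 1 then B8 else if s!3 = 2 then [] else []) else if s!2 = 1 then (if s!3 = 0 then [] else if s!3 = 1 then B9 else if s!3 = 2 then [] else []) else if s!2 = 2 then (if s!3 = 0 then [] else if s!3 = 1 then B10 else if s!3 = 2 then [] else []) else (if s!3 = 0 then [] else if s!3 = 1 then B11 else if s!3 = 2 then [] else [])) else if s!1 = 1 then (if s!2 = 0 then (if s!3 = 0 then [] else if s!3 = 1 then B12 else if s!3 = 2 then [] else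 []) else if s!2 = 1 then (if s!3 = 0 then [] else if s!3 = 1 then [] else if s!3 = 2 then B13 else []) else if s!2 = 2 then (if s!3 = 0 then [] else if s!3 = 1 then [] else if s!3 = 2 then [] else B14) else (if s!3 = 0 then B15 else if s!3 = 1 then [] else if s!3 = 2 then [] else [])) else if s!1 = 2 then (if s!2 = 0 then (if s!3 = 0 then [] else if s!3 = 1 then B16 else if s!3 = 2 then [] else []) else if s!2 = 1 then (if s!3 = 0 then [] else if s!3 = 1 then [] else if s!3 = 2 then [] else B17) else if s!2 = 2 then (if s!3 = 0 then [] else if s!3 = 1 then B18 else if s!3 = 2 then [] else []) else (if s!3 = 0 then [] else if s!3 = 1 then [] else if s!3 = 2 then [] else B19)) else (if s!2 = 0 then (if s!3 = 0 then [] else if s!3 = 1 then B20 else if s!3 = 2 then [] else []) else if s!2 = 1 then (if s!3 = 0 then B21 else if s!3 = 1 then [] else if s!3 = 2 then [] else []) else if s!2 = 2 then (if s!3 = 0 then [] else if s!3 = 1 then [] else if s!3 = 2 then [] else B22) else (if s!3 = 0 then [] else if s!3 = 1 then [] else if s!3 = 2 then B23 else []))) else if s!0 = 2 then (if s!1 = 0 then [] else if s!1 = 1 then (if s!2 = 0 then [] else if s!2 = 1 then (if s!3 = 0 then [] else if s!3 = 1 then B24 else if s!3 = 2 then [] else B25) else if s!2 = 2 then [] else (if s!3 = 0 then B26 else if s!3 = 1 then [] else if s!3 = 2 then B27 else [])) else if s!1 = 2 then [] else (if s!2 = 0 then [] else if s!2 = 1 then (if s!3 = 0 then B28 else if s!3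 = 1 then [] else if s!3 = 2 then B29 else []) else if s!2 = 2 then [] else (if s!3 = 0 then [] else if s!3 = 1 then B30 else if s!3 = 2 then [] else B31))) else (if s!1 = 0 then (if s!2 = 0 then (if s!3 = 0 then [] else if s!3 = 1 then [] else if s!3 = 2 then [] else B32) else if s!2 = 1 then (if s!3 = 0 then [] else if s!3 = 1 then [] else if s!3 = 2 then [] else B33) else if s!2 = 2 then (if s!3 = 0 then [] else if s!3 = 1 then [] else if s!3 = 2 then [] else B34) else (if s!3 = 0 then [] else if s!3 = 1 then [] else if s!3 = 2 then [] else B35)) else if s!1 = 1 then (if s!2 = 0 then (if s!3 = 0 then [] else if s!3 = 1 then [] else if s!3 = 2 then [] else B36) else if s!2 = 1 then (if s!3 = 0 then [] else if s!3 = 1 then [] else if s!3 = 2 then B37 else []) else if s!2 = 2 then (if s!3 = 0 then [] else if s!3 = 1 then B38 else if s!3 = 2 then [] else []) else (if s!3 = 0 then B39 else if s!3 = 1 then [] else if s!3 = 2 then [] else [])) else if s!1 = 2 then (if s!2 = 0 then (if s!3 = 0 then [] else if s!3 = 1 then [] else if s!3 = 2 then [] else B40) else if s!2 = 1 then (if s!3 = 0 then [] else if s!3 = 1 then B41 else if s!3 = 2 then [] else []) else if s!2 = 2 then (if s!3 = 0 then [] else if s!3 = 1 then [] else if s!3 = 2 then [] else B42) else (if s!3 = 0 then [] else if s!3 = 1 then B43 else if s!3 = 2 then [] else [])) else (if s!2 = 0 then (if s!3 = 0 then [] else if s!3 = 1 then [] else if s!3 = 2 then [] else B44) else if s!2 =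 1 then (if s!3 = 0 then B45 else if s!3 = 1 then [] else if s!3 = 2 then [] else []) else if s!2 = 2 then (if s!3 = 0 then [] else if s!3 = 1 then B46 else if s!3 = 2 then [] else []) else (if s!3 = 0 then [] else if s!3 = 1 then [] else if s!3 = 2 then B47 else []))))"

lemma look_sub: "x \<in> set (look s) \<Longrightarrow> x \<in> set LL"
  unfolding look_def LL_def by (simp split: if_split_asm)

lemma cl_gR_0: "list_all (\<lambda>s. List.member (look (mulst s gR)) (mulst s gR)) (B0 @ B1 @ B2 @ B3 @ B4 @ B5)"
  by code_simp
lemma cl_gS_0: "list_all (\<lambda>s. List.member (look (mulst s gS)) (mulst s gS)) (B0 @ B1 @ B2 @ B3 @ B4 @ B5)"
  by code_simp
lemma cl_gRi_0: "list_all (\<lambda>s. List.member (look (mulst s gRi)) (mulst s gRi)) (B0 @ B1 @ B2 @ B3 @ B4 @ B5)"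
  by code_simp
lemma cl_gSi_0: "list_all (\<lambda>s. List.member (look (mulst s gSi)) (mulst s gSi)) (B0 @ B1 @ B2 @ B3 @ B4 @ B5)"
  by code_simp
lemma cl_gR_1: "list_all (\<lambda>s. List.member (look (mulst s gR)) (mulst s gR)) (B6 @ B7 @ B8 @ B9 @ B10 @ B11)"
  by code_simp
lemma cl_gS_1: "list_all (\<lambda>s. List.member (look (mulst s gS)) (mulst s gS)) (B6 @ B7 @ B8 @ B9 @ B10 @ B11)"
  by code_simp
lemma cl_gRi_1: "list_all (\<lambda>s. List.member (look (mulst s gRi)) (mulst s gRi)) (B6 @ B7 @ B8 @ B9 @ B10 @ B11)"
  by code_simp
lemma cl_gSi_1: "list_all (\<lambda>s. List.member (look (mulst s gSi)) (mulst s gSi)) (B6 @ B7 @ B8 @ B9 @ B10 @ B11)"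
  by code_simp
lemma cl_gR_2: "list_all (\<lambda>s. List.member (look (mulst s gR)) (mulst s gR)) (B12 @ B13 @ B14 @ B15 @ B16 @ B17)"
  by code_simp
lemma cl_gS_2: "list_all (\<lambda>s. List.member (look (mulst s gS)) (mulst s gS)) (B12 @ B13 @ B14 @ B15 @ B16 @ B17)"
  by code_simp
lemma cl_gRi_2: "list_all (\<lambda>s. List.member (look (mulst s gRi)) (mulst s gRi)) (B12 @ B13 @ B14 @ B15 @ B16 @ B17)"
  by code_simp
lemma cl_gSi_2: "list_all (\<lambda>s. List.member (look (mulst s gSi)) (mulst s gSi)) (B12 @ B13 @ B14 @ B15 @ B16 @ B17)"
  by code_simp
lemma cl_gR_3: "list_all (\<lambda>s. List.member (look (mulst s gR)) (mulst s gR)) (B18 @ B19 @ B20 @ B21 @ B22 @ B23)"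
  by code_simp
lemma cl_gS_3: "list_all (\<lambda>s. List.member (look (mulst s gS)) (mulst s gS)) (B18 @ B19 @ B20 @ B21 @ B22 @ B23)"
  by code_simp
lemma cl_gRi_3: "list_all (\<lambda>s. List.member (look (mulst s gRi)) (mulst s gRi)) (B18 @ B19 @ B20 @ B21 @ B22 @ B23)"
  by code_simp
lemma cl_gSi_3: "list_all (\<lambda>s. List.member (look (mulst s gSi)) (mulst s gSi)) (B18 @ B19 @ B20 @ B21 @ B22 @ B23)"
  by code_simp
lemma cl_gR_4: "list_all (\<lambda>s. List.member (look (mulst s gR)) (mulst s gR)) (B24 @ B25 @ B26 @ B27 @ B28 @ B29)"
  by code_simp
lemma cl_gS_4: "list_all (\<lambda>s. List.member (look (mulst s gS)) (mulst s gS)) (B24 @ B25 @ B26 @ B27 @ B28 @ B29)"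
  by code_simp
lemma cl_gRi_4: "list_all (\<lambda>s. List.member (look (mulst s gRi)) (mulst s gRi)) (B24 @ B25 @ B26 @ B27 @ B28 @ B29)"
  by code_simp
lemma cl_gSi_4: "list_all (\<lambda>s. List.member (look (mulst s gSi)) (mulst s gSi)) (B24 @ B25 @ B26 @ B27 @ B28 @ B29)"
  by code_simp
lemma cl_gR_5: "list_all (\<lambda>s. List.member (look (mulst s gR)) (mulst s gR)) (B30 @ B31 @ B32 @ B33 @ B34 @ B35)"
  by code_simp
lemma cl_gS_5: "list_all (\<lambda>s. List.member (look (mulst s gS)) (mulst s gS)) (B30 @ B31 @ B32 @ B33 @ B34 @ B35)"
  by code_simp
lemma cl_gRi_5: "list_all (\<lambda>s. List.member (look (mulst s gRi)) (mulst s gRi)) (B30 @ B31 @ B32 @ B33 @ B34 @ B35)"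
  by code_simp
lemma cl_gSi_5: "list_all (\<lambda>s. List.member (look (mulst s gSi)) (mulst s gSi)) (B30 @ B31 @ B32 @ B33 @ B34 @ B35)"
  by code_simp
lemma cl_gR_6: "list_all (\<lambda>s. List.member (look (mulst s gR)) (mulst s gR)) (B36 @ B37 @ B38 @ B39 @ B40 @ B41)"
  by code_simp
lemma cl_gS_6: "list_all (\<lambda>s. List.member (look (mulst s gS)) (mulst s gS)) (B36 @ B37 @ B38 @ B39 @ B40 @ B41)"
  by code_simp
lemma cl_gRi_6: "list_all (\<lambda>s. List.member (look (mulst s gRi)) (mulst s gRi)) (B36 @ B37 @ B38 @ B39 @ B40 @ B41)"
  by code_simp
lemma cl_gSi_6: "list_all (\<lambda>s. List.member (look (mulst s gSi)) (mulst s gSi)) (B36 @ B37 @ B38 @ B39 @ B40 @ B41)"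
  by code_simp
lemma cl_gR_7: "list_all (\<lambda>s. List.member (look (mulst s gR)) (mulst s gR)) (B42 @ B43 @ B44 @ B45 @ B46 @ B47)"
  by code_simp
lemma cl_gS_7: "list_all (\<lambda>s. List.member (look (mulst s gS)) (mulst s gS)) (B42 @ B43 @ B44 @ B45 @ B46 @ B47)"
  by code_simp
lemma cl_gRi_7: "list_all (\<lambda>s. List.member (look (mulst s gRi)) (mulst s gRi)) (B42 @ B43 @ B44 @ B45 @ B46 @ B47)"
  by code_simp
lemma cl_gSi_7: "list_all (\<lambda>s. List.member (look (mulst s gSi)) (mulst s gSi)) (B42 @ B43 @ B44 @ B45 @ B46 @ B47)"
  by code_simp

lemma B_cover: "set LL = set (B0 @ B1 @ B2 @ B3 @ B4 @ B5) \<union> set (B6 @ B7 @ B8 @ B9 @ B10 @ B11)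
   \<union> set (B12 @ B13 @ B14 @ B15 @ B16 @ B17) \<union> set (B18 @ B19 @ B20 @ B21 @ B22 @ B23)
   \<union> set (B24 @ B25 @ B26 @ B27 @ B28 @ B29) \<union> set (B30 @ B31 @ B32 @ B33 @ B34 @ B35)
   \<union> set (B36 @ B37 @ B38 @ B39 @ B40 @ B41) \<union> set (B42 @ B43 @ B44 @ B45 @ B46 @ B47)"
  unfolding LL_def by auto

lemma h_gR: "\<forall>s\<in>set LL. mulst s gR \<in> set (look (mulst s gR))"
  unfolding B_cover ball_Un using cl_gR_0 cl_gR_1 cl_gR_2 cl_gR_3 cl_gR_4 cl_gR_5 cl_gR_6 cl_gR_7 unfolding list_all_iff List.member_iff by blast

lemma h_gS: "\<forall>s\<in>set LL. mulst s gS \<in> set (look (mulst s gS))"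
  unfolding B_cover ball_Un using cl_gS_0 cl_gS_1 cl_gS_2 cl_gS_3 cl_gS_4 cl_gS_5 cl_gS_6 cl_gS_7 unfolding list_all_iff List.member_iff by blast

lemma h_gRi: "\<forall>s\<in>set LL. mulst s gRi \<in> set (look (mulst s gRi))"
  unfolding B_cover ball_Un using cl_gRi_0 cl_gRi_1 cl_gRi_2 cl_gRi_3 cl_gRi_4 cl_gRi_5 cl_gRi_6 cl_gRi_7 unfolding list_all_iff List.member_iff by blast

lemma h_gSi: "\<forall>s\<in>set LL. mulst s gSi \<in> set (look (mulst s gSi))"
  unfolding B_cover ball_Un using cl_gSi_0 cl_gSi_1 cl_gSi_2 cl_gSi_3 cl_gSi_4 cl_gSi_5 cl_gSi_6 cl_gSi_7 unfolding list_all_iff List.member_iff by blast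

lemma closed_gen:
  assumes "s \<in> set LL" "g \<in> {gR, gS, gRi, gSi}"
  shows "mulst s g \<in> set LL"
proof -
  have "mulst s g \<in> set (look (mulst s g))"
    using assms h_gR h_gS h_gRi h_gSi by blast
  then show ?thesis by (rule look_sub)
qed

lemma gI_in: "gI \<in> set LL"
proof -
  have "List.member (look gI) gI" by code_simp
  then show ?thesis using look_sub by simp
qed

lemma Gq_good:
  assumes "M \<in> Gq"
  shows "\<forall>s\<in>set LL. \<forall>X Y. good s X Y \<longrightarrow> (\<exists>t\<in>set LL. good t (X ** M 1) (Y ** M \<i>))"
  using assms
proof (induction rule: Gq.induct)
  case one
  then show ?case by auto
next
  case R
  then show ?case using good_mult[OF _ good_R] closed_gen by blast
next
  case S
  then show ?case using good_mult[OF _ good_S] closed_gen by blast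
next
  case Rinv
  then show ?case using good_mult[OF _ good_Ri] closed_gen by blast
next
  case Sinv
  then show ?case using good_mult[OF _ good_Si] closed_gen by blast
next
  case (mult M N)
  show ?case
  proof (intro ballI allI impI)
    fix s X Y assume "s \<in> set LL" "good s X Y"
    then obtain t where "t \<in> set LL" "good t (X ** M 1) (Y ** M \<i>)" using mult.IH(1) by blast
    then obtain u where "u \<in> set LL" "good u ((X ** M 1) ** N 1) ((Y ** M \<i>) ** N \<i>)"
      using mult.IH(2) by blast
    then show "\<exists>t\<in>set LL. good t (X ** (M 1 ** N 1)) (Y ** (M \<i> ** N \<i>))"
      by (auto simp: matrix_mul_assoc)
  qed
qed

lemma Gq_state: "M \<in> Gq \<Longrightarrow> \<exists>t\<in>set LL. good t (M 1) (M \<i>)"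
  using Gq_good[of M] gI_in good_I by fastforce

lemma tr_check: "list_all (\<lambda>t. (t!4 + t!10, t!5 + t!11) \<in> set [(0,0),(1,0),(-1,0),(2,0),(-2,0),(0,1),(0,-1),(0,2),(0,-2),(1,1),(1,-1),(-1,1),(-1,-1)]) LL"
  by code_simp

lemma four_check: "list_all (\<lambda>t. (t!0 + t!3) mod 4 = 0 \<longrightarrow> t!4 + t!10 = 0 \<and> t!5 + t!11 = 0) LL"
  by code_simp

lemma trace_good: "good t X Y \<Longrightarrow> trace Y = gauss (t!4 + t!10) (t!5 + t!11)"
  unfolding good_def by (auto simp: trace_mat2 gauss_add)


lemma trace_in_set:
  assumes "M \<in> Gq"
  shows "trace (M \<i>) \<in> {0, 1, -1, 2, -2, \<i>, -\<i>, 2*\<i>, -2*\<i>, 1+\<i>, 1-\<i>, -1+\<i>, -1-\<i>}"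
proof -
  obtain t where t: "t \<in> set LL" "good t (M 1) (M \<i>)" using Gq_state[OF assms] by blast
  have "(t!4 + t!10, t!5 + t!11) \<in> set [(0,0),(1,0),(-1,0),(2,0),(-2,0),(0,1),(0,-1),(0,2),(0,-2),(1,1),(1,-1),(-1,1),(-1,-1)]"
    using tr_check t(1) unfolding list_all_iff by blast
  moreover have "\<forall>p\<in>set [(0,0),(1,0),(-1,0),(2,0),(-2,0),(0,1),(0,-1),(0,2),(0,-2),(1,1),(1,-1),(-1,1),(-1,-1)].
     gauss (fst p) (snd p) \<in> {0, 1, -1, 2, -2, \<i>, -\<i>, 2*\<i>, -2*\<i>, 1+\<i>, 1-\<i>, -1+\<i>, -1-\<i>}"
    by (simp add: gauss_def)
  ultimately show ?thesis unfolding trace_good[OF t(2)] by fastforce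
qed

lemma trace_four:
  assumes "M \<in> Gq" "trace (M 1) = 4 * of_int k"
  shows "trace (M \<i>) = 0"
proof -
  obtain t where t: "t \<in> set LL" "good t (M 1) (M \<i>)" using Gq_state[OF assms(1)] by blast
  obtain a0 a1 a2 a3 where A: "M 1 = mat2 (of_int a0) (of_int a1) (of_int a2) (of_int a3)"
      "a0 mod 4 = t!0" "a3 mod 4 = t!3"
    using t(2) unfolding good_def by blast
  have "of_int (a0 + a3) = (of_int (4 * k) :: complex)"
    using assms(2) unfolding A(1) trace_mat2 by simp
  then have "a0 + a3 = 4 * k" by (simp only: of_int_eq_iff)
  then have "(a0 + a3) mod 4 = 0" by simp
  then have "(t!0 + t!3) mod 4 = 0" using A(2,3) by (metis mod_add_eq)
  then have "t!4 + t!10 = 0 \<and> t!5 + t!11 = 0" using four_check t(1) by (auto simp: list_all_iff)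
  then show ?thesis unfolding trace_good[OF t(2)] by (simp add: gauss_def)
qed

lemma witness: "M \<in> Gq \<Longrightarrow> trace (M \<i>) = v \<Longrightarrow> v \<in> trace ` Gq_at \<i>"
  unfolding Gq_at_def by (metis image_eqI)

lemma traces_ge:
  "{0, 1, -1, 2, -2, \<i>, -\<i>, 2*\<i>, -2*\<i>, 1+\<i>, 1-\<i>, -1+\<i>, -1-\<i>} \<subseteq> trace ` Gq_at \<i>"
proof -
  note simps = Rq_def Sq_def Rq_inv_def Sq_inv_def mat2_mult trace_mat2 mat2_one
  have RS: "(\<lambda>q. Rq q ** Sq q) \<in> Gq" by (rule Gq.mult[OF Gq.R Gq.S])
  have SS: "(\<lambda>q. Sq q ** Sq q) \<in> Gq" by (rule Gq.mult[OF Gq.S Gq.S])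
  have SiSi: "(\<lambda>q. Sq_inv q ** Sq_inv q) \<in> Gq" by (rule Gq.mult[OF Gq.Sinv Gq.Sinv])
  have "0 \<in> trace ` Gq_at \<i>" by (rule witness[OF Gq.S]) (simp add: simps)
  moreover have "1 \<in> trace ` Gq_at \<i>" by (rule witness[OF RS]) (simp add: simps)
  moreover have "-1 \<in> trace ` Gq_at \<i>" by (rule witness[OF Gq.mult[OF RS RS]]) (simp add: simps)
  moreover have "2 \<in> trace ` Gq_at \<i>" by (rule witness[OF Gq.one]) (simp add: simps)
  moreover have "-2 \<in> trace ` Gq_at \<i>" by (rule witness[OF Gq.mult[OF SS SS]]) (simp add: simps)
  moreover have "\<i> \<in> trace ` Gq_at \<i>" by (rule witness[OF Gq.mult[OF Gq.S Gq.Rinv]]) (simp add: simps)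
  moreover have "-\<i> \<in> trace ` Gq_at \<i>" by (rule witness[OF Gq.mult[OF Gq.R Gq.Sinv]]) (simp add: simps)
  moreover have "2*\<i> \<in> trace ` Gq_at \<i>" by (rule witness[OF SS]) (simp add: simps)
  moreover have "-2*\<i> \<in> trace ` Gq_at \<i>" by (rule witness[OF SiSi]) (simp add: simps)
  moreover have "1+\<i> \<in> trace ` Gq_at \<i>" by (rule witness[OF Gq.R]) (simp add: simps)
  moreover have "1-\<i> \<in> trace ` Gq_at \<i>" by (rule witness[OF Gq.Rinv]) (simp add: simps)
  moreover have "-1+\<i> \<in> trace ` Gq_at \<i>" by (rule witness[OF Gq.mult[OF RS Gq.S]]) (simp add: simps)
  moreover have "-1-\<i> \<in> trace ` Gq_at \<i>" by (rule witness[OF Gq.mult[OF Gq.Rinv SiSi]]) (simp add: simps)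
  ultimately show ?thesis by blast
qed

lemma z8_cases:
  fixes z :: complex
  assumes "z ^ 8 = 1" "z ^ 4 \<noteq> 1"
  shows "complex_of_real (sqrt 2) * z \<in> {1+\<i>, 1-\<i>, -1+\<i>, -1-\<i>}"
proof -
  define w where "w = complex_of_real (sqrt 2) * z"
  have "(z^4 - 1) * (z^4 + 1) = 0" using assms(1) by (simp add: algebra_simps flip: power_add)
  then have "z^4 - 1 = 0 \<or> z^4 + 1 = 0" by (simp only: mult_eq_0_iff)
  then have "z^4 + 1 = 0" using assms(2) by simp
  then have z4: "z^4 = -1" by (simp only: eq_neg_iff_add_eq_0)
  have r4: "(sqrt 2::real) ^ 4 = 4"
  proof -
    have "(sqrt 2::real) ^ 4 = (sqrt 2 ^ 2) ^ 2" by (simp only: power_mult[symmetric]) simp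
    also have "\<dots> = 4" by simp
    finally show ?thesis .
  qed
  have s2: "complex_of_real (sqrt 2) ^ 4 = 4"
    by (simp only: of_real_power[symmetric] r4) simp
  have "w ^ 4 = -4" unfolding w_def power_mult_distrib s2 z4 by simp
  then have "(w - (1+\<i>)) * (w - (1-\<i>)) * (w - (-1+\<i>)) * (w - (-1-\<i>)) = 0"
    by (simp add: algebra_simps power2_eq_square power4_eq_xxxx)
  then show ?thesis unfolding w_def[symmetric] by auto
qed

lemma rhs_eq:
  fixes c0 :: complex
  assumes "c0 \<in> {1+\<i>, 1-\<i>, -1+\<i>, -1-\<i>}"
  shows "{0, 1, -1, 2, -2, \<i>, -\<i>, 2*\<i>, -2*\<i>, 1+\<i>, 1-\<i>, -1+\<i>, -1-\<i>} =
            {0} \<union> (\<Union>j\<in>{0..3::nat}. let c = \<i> ^ j in {c, c0 * c, 2 * c})"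
proof -
  have e: "{0..3::nat} = {0,1,2,3}" by auto
  have p3: "\<i> ^ 3 = - \<i>" by (simp add: power3_eq_cube)
  have "{0} \<union> (\<Union>j\<in>{0..3::nat}. let c = \<i> ^ j in {c, c0 * c, 2 * c})
     = {0, 1, c0, 2, \<i>, c0*\<i>, 2*\<i>, -1, -c0, -2, -\<i>, -(c0*\<i>), -2*\<i>}"
    unfolding e by (auto simp: Let_def p3)
  also have "\<dots> = {0, 1, -1, 2, -2, \<i>, -\<i>, 2*\<i>, -2*\<i>, 1+\<i>, 1-\<i>, -1+\<i>, -1-\<i>}"
    using assms by (auto simp: complex_eq_iff)
  finally show ?thesis by simp
qed

theorem corollary3p5:
  shows "trace ` Gq_at \<i> =
           {0, 1, -1, 2, -2, \<i>, -\<i>, 2*\<i>, -2*\<i>, 1+\<i>, 1-\<i>, -1+\<i>, -1-\<i>}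
       \<and> (\<forall>z8::complex. z8 ^ 8 = 1 \<and> (\<forall>k\<in>{1..7::nat}. z8 ^ k \<noteq> 1) \<longrightarrow>
            {0, 1, -1, 2, -2, \<i>, -\<i>, 2*\<i>, -2*\<i>, 1+\<i>, 1-\<i>, -1+\<i>, -1-\<i>} =
            {0} \<union> (\<Union>j\<in>{0..3::nat}. let c = \<i> ^ j in
                       {c, complex_of_real (sqrt 2) * z8 * c, 2 * c}))
       \<and> (\<forall>M\<in>Gq. (\<exists>k::int. trace (M 1) = 4 * of_int k) \<longrightarrow> trace (M \<i>) = 0)"
  proof (intro conjI)
  show "trace ` Gq_at \<i> =
           {0, 1, -1, 2, -2, \<i>, -\<i>, 2*\<i>, -2*\<i>, 1+\<i>, 1-\<i>, -1+\<i>, -1-\<i>}"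
  proof
    show "trace ` Gq_at \<i> \<subseteq> {0, 1, -1, 2, -2, \<i>, -\<i>, 2*\<i>, -2*\<i>, 1+\<i>, 1-\<i>, -1+\<i>, -1-\<i>}"
      unfolding Gq_at_def using trace_in_set by auto
  qed (rule traces_ge)
next
  show "\<forall>M\<in>Gq. (\<exists>k::int. trace (M 1) = 4 * of_int k) \<longrightarrow> trace (M \<i>) = 0"
    using trace_four by blast
next
  show "\<forall>z8::complex. z8 ^ 8 = 1 \<and> (\<forall>k\<in>{1..7::nat}. z8 ^ k \<noteq> 1) \<longrightarrow>
            {0, 1, -1, 2, -2, \<i>, -\<i>, 2*\<i>, -2*\<i>, 1+\<i>, 1-\<i>, -1+\<i>, -1-\<i>} =
            {0} \<union> (\<Union>j\<in>{0..3::nat}. let c = \<i> ^ j in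
                       {c, complex_of_real (sqrt 2) * z8 * c, 2 * c})"
  proof (intro allI impI)
    fix z8 :: complex
    assume h: "z8 ^ 8 = 1 \<and> (\<forall>k\<in>{1..7::nat}. z8 ^ k \<noteq> 1)"
    then have "complex_of_real (sqrt 2) * z8 \<in> {1+\<i>, 1-\<i>, -1+\<i>, -1-\<i>}"
      by (intro z8_cases) auto
    then show "{0, 1, -1, 2, -2, \<i>, -\<i>, 2*\<i>, -2*\<i>, 1+\<i>, 1-\<i>, -1+\<i>, -1-\<i>} =
            {0} \<union> (\<Union>j\<in>{0..3::nat}. let c = \<i> ^ j in
                       {c, complex_of_real (sqrt 2) * z8 * c, 2 * c})"
      by (rule rhs_eq)
  qed
qed

end
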